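(* Let $(X,T)$ be a minimal Cantor system which is topologically conjugate via $\varphi:X\to U$ to the induced system $(U,T_U)$, where $U\subsetneq X$ is clopen. Then for every $k\ge0$, the restriction $\varphi|_{\varphi^k(X)}$ is a conjugacy from the induced system $(\varphi^k(X),T_{\varphi^k(X)})$ to the induced system $(\varphi^{k+1}(X),T_{\varphi^{k+1}(X)})$. In particular $(X,T)$ and $(\varphi^k(X),T_{\varphi^k(X)})$ are conjugate by $\varphi^k$.
   Context: A minimal Cantor system is a pair $(X,T)$, $X$ a Cantor set, $T$ a homeomorphism with all orbits dense. For a clopen $V\subset X$, $r_V(x)=\inf\{n>0:T^nx\in V\}$ and the induced map is $T_V:V\to V$, $T_V(x)=T^{r_V(x)}(x)$. *)

theory Defs
  imports "HOL-Analysis.Analysis"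
begin

definition cantor_set :: "'a::metric_space set \<Rightarrow> bool" where
  "cantor_set X \<longleftrightarrow> X \<noteq> {} \<and> compact X \<and> (\<forall>x\<in>X. x islimpt X)
     \<and> (\<forall>x\<in>X. connected_component_set X x = {x})"

definition orbit :: "'a set \<Rightarrow> ('a \<Rightarrow> 'a) \<Rightarrow> 'a \<Rightarrow> 'a set" where
  "orbit X T x = {(T ^^ n) x | n. True} \<union> {(the_inv_into X T ^^ n) x | n. True}"

definition minimal_cantor_system :: "'a::metric_space set \<Rightarrow> ('a \<Rightarrow> 'a) \<Rightarrow> bool" where
  "minimal_cantor_system X T \<longleftrightarrow> cantor_set X \<and> (\<exists>g. homeomorphism X X T g)
     \<and> (\<forall>x\<in>X. X \<subseteq> closure (orbit X T x))"

definition clopen_in :: "'a::topological_space set \<Rightarrow> 'a set \<Rightarrow> bool" where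
  "clopen_in X V \<longleftrightarrow> openin (top_of_set X) V \<and> closedin (top_of_set X) V"

definition return_time :: "('a \<Rightarrow> 'a) \<Rightarrow> 'a set \<Rightarrow> 'a \<Rightarrow> nat" where
  "return_time T V x = (LEAST n. n > 0 \<and> (T ^^ n) x \<in> V)"

definition induced_map :: "('a \<Rightarrow> 'a) \<Rightarrow> 'a set \<Rightarrow> 'a \<Rightarrow> 'a" where
  "induced_map T V x = (T ^^ return_time T V x) x"

definition conjugacy :: "('a::topological_space \<Rightarrow> 'b::topological_space) \<Rightarrow> 'a set \<Rightarrow> ('a \<Rightarrow> 'a)
     \<Rightarrow> 'b set \<Rightarrow> ('b \<Rightarrow> 'b) \<Rightarrow> bool" where
  "conjugacy \<phi> A S B R \<longleftrightarrow> (\<exists>\<psi>. homeomorphism A B \<phi> \<psi>) \<and> (\<forall>x\<in>A. \<phi> (S x) = R (\<phi> x))"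

end

theory Submission
  imports Defs
begin

lemma funpow_cont:
  assumes "continuous_on X T" "T ` X \<subseteq> X"
  shows "continuous_on X (T^^n) \<and> (T^^n) ` X \<subseteq> X"
proof (induction n)
  case 0 then show ?case by (simp add: continuous_on_id)
next
  case (Suc n)
  then have "continuous_on X (T \<circ> T^^n)"
    by (meson assms(1) continuous_on_compose continuous_on_subset)
  then show ?case using Suc assms by (auto simp: image_subset_iff)
qed

lemma funpow_in: "T ` X \<subseteq> X \<Longrightarrow> z \<in> X \<Longrightarrow> (T^^n) z \<in> X"
  by (induction n) auto

lemma recur:
  assumes hom: "homeomorphism X X T g" and dense: "\<forall>x\<in>X. X \<subseteq> closure (orbit X T x)"
    and cpt: "compact X"
    and V: "openin (top_of_set X) V" "V \<noteq> {}" and x: "x \<in> X"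
  shows "\<exists>n>0. (T^^n) x \<in> V"
proof -
  have TX: "T ` X = X" and gX: "g ` X = X" and gT: "\<forall>z\<in>X. g (T z) = z"
    and Tg: "\<forall>z\<in>X. T (g z) = z" and cT: "continuous_on X T" and cg: "continuous_on X g"
    using hom unfolding homeomorphism_def by auto
  have inv: "the_inv_into X T z = g z" if "z \<in> X" for z
  proof -
    have "inj_on T X" using gT by (metis inj_on_inverseI)
    moreover have "g z \<in> X" using gX that by blast
    ultimately show ?thesis using the_inv_into_f_f[of T X "g z"] Tg that by simp
  qed
  have invn: "(the_inv_into X T ^^ n) z = (g^^n) z \<and> (g^^n) z \<in> X" if "z \<in> X" for z n
    using that by (induction n) (use gX in \<open>auto simp: inv\<close>)
  have Tn: "(T^^n) z \<in> X" if "z\<in>X" for z n using funpow_in[of T X z n] TX that by simp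
  define C where "C n = X \<inter> (T^^n) -` V" for n
  define D where "D n = X \<inter> (g^^n) -` V" for n
  have oC: "openin (top_of_set X) (C n)" for n
    unfolding C_def
    by (rule continuous_openin_preimage[OF _ _ V(1)])
       (use funpow_cont[of X T n] cT TX in auto)
  have oD: "openin (top_of_set X) (D n)" for n
    unfolding D_def
    by (rule continuous_openin_preimage[OF _ _ V(1)])
       (use funpow_cont[of X g n] cg gX in auto)
  have cover: "X \<subseteq> \<Union> (range C \<union> range D)"
  proof
    fix z assume z: "z \<in> X"
    obtain Op where Op: "open Op" "V = X \<inter> Op" using V(1) by (auto simp: openin_open)
    obtain v where v: "v \<in> V" using V(2) by blast
    have "v \<in> closure (orbit X T z)" using dense z v Op by blast
    hence "Op \<inter> orbit X T z \<noteq> {}" using open_Int_closure_eq_empty[OF Op(1)] v Op by blast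
    then obtain w where w: "w \<in> Op" "w \<in> orbit X T z" by blast
    then consider n where "w = (T^^n) z" | n where "w = (the_inv_into X T ^^ n) z"
      unfolding orbit_def by blast
    then show "z \<in> \<Union> (range C \<union> range D)"
    proof cases
      case 1 then show ?thesis using w Tn[OF z, of n] Op z by (auto simp: C_def)
    next
      case 2 then show ?thesis using w invn[OF z, of n] Op z by (auto simp: D_def)
    qed
  qed
  obtain F where F: "F \<subseteq> range C \<union> range D" "finite F" "X \<subseteq> \<Union>F"
  proof -
    have "\<forall>c\<in>range C \<union> range D. openin (top_of_set X) c" using oC oD by blast
    then show ?thesis using cpt cover that unfolding compact_eq_openin_cover by meson
  qed
  have "\<exists>N. \<forall>S\<in>F. \<exists>n\<le>N. S = C n \<or> S = D n"
    using F(2,1)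
  proof (induction F rule: finite_induct)
    case empty then show ?case by simp
  next
    case (insert S F)
    have "F \<subseteq> range C \<union> range D" using insert.prems by blast
    then obtain N where N: "\<forall>S\<in>F. \<exists>n\<le>N. S = C n \<or> S = D n" using insert.IH by blast
    have "S \<in> range C \<union> range D" using insert.prems by blast
    then obtain m where m: "S = C m \<or> S = D m" by blast
    have "\<forall>S'\<in>insert S F. \<exists>n\<le>max N m. S' = C n \<or> S' = D n"
    proof
      fix S' assume "S' \<in> insert S F"
      then show "\<exists>n\<le>max N m. S' = C n \<or> S' = D n"
      proof
        assume "S' = S" then show ?thesis using m by (intro exI[of _ m]) auto
      next
        assume "S' \<in> F" then obtain n where "n \<le> N" "S' = C n \<or> S' = D n" using N by blast
        then show ?thesis by (intro exI[of _ n]) auto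
      qed
    qed
    then show ?case by blast
  qed
  then obtain N where N: "\<forall>S\<in>F. \<exists>n\<le>N. S = C n \<or> S = D n" by blast
  have y: "(T^^Suc N) x \<in> X" using Tn x by blast
  then obtain S where S: "S \<in> F" "(T^^Suc N) x \<in> S" using F(3) by blast
  then obtain n where n: "n \<le> N" "S = C n \<or> S = D n" using N by blast
  have bk: "(g^^n) ((T^^(n + m)) z) = (T^^m) z" if "z \<in> X" for z m n
  proof (induction n)
    case 0 then show ?case by simp
  next
    case (Suc n)
    have "(g^^Suc n) ((T^^(Suc n + m)) z) = (g^^n) (g (T ((T^^(n + m)) z)))"
      by (simp add: funpow_swap1)
    also have "\<dots> = (g^^n) ((T^^(n + m)) z)" using gT Tn[OF that] by simp
    finally show ?case using Suc by simp
  qed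
  from n(2) show ?thesis
  proof
    assume "S = C n"
    then have "(T^^n) ((T^^Suc N) x) \<in> V" using S unfolding C_def by blast
    then have "(T^^(n + Suc N)) x \<in> V" by (simp only: funpow_add comp_apply)
    then show ?thesis by (intro exI[of _ "n + Suc N"]) simp
  next
    assume "S = D n"
    then have "(g^^n) ((T^^Suc N) x) \<in> V" using S unfolding D_def by blast
    moreover have "n + (Suc N - n) = Suc N" using n by simp
    ultimately have "(g^^n) ((T^^(n + (Suc N - n))) x) \<in> V" by simp
    then have "(T^^(Suc N - n)) x \<in> V" using bk[OF x] by simp
    then show ?thesis using n by (intro exI[of _ "Suc N - n"]) simp
  qed
qed


lemma ind_ind:
  assumes TX: "T ` X \<subseteq> X" and UX: "U \<subseteq> X" and rec: "\<forall>z\<in>X. \<exists>n>0. (T^^n) z \<in> U"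
    and y: "y \<in> X" and B: "B \<subseteq> U" and m: "m > 0" "(induced_map T U ^^ m) y \<in> B"
    and mmin: "\<forall>j. 0<j \<and> j<m \<longrightarrow> (induced_map T U ^^ j) y \<notin> B"
  shows "induced_map T B y = (induced_map T U ^^ m) y"
proof -
  define R where "R = induced_map T U"
  define rt where "rt = return_time T U"
  have rt: "rt z > 0 \<and> (T^^rt z) z \<in> U" if "z\<in>X" for z
    using LeastI_ex[OF rec[rule_format, OF that]] unfolding rt_def return_time_def by blast
  have rtmin: "(T^^n) z \<notin> U" if "0<n" "n < rt z" for z n
    using not_less_Least[OF that(2)[unfolded rt_def return_time_def]] that(1) by blast
  have RX: "R z = (T^^rt z) z" for z unfolding R_def rt_def induced_map_def by simp
  have inX: "(T^^n) z \<in> X" if "z\<in>X" for z n using funpow_in[OF TX that] .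
  define s where "s j = (\<Sum>i<j. rt ((R^^i) y))" for j
  have sSuc: "s (Suc j) = s j + rt ((R^^j) y)" for j by (simp add: s_def)
  have Rs: "(R^^j) y = (T^^(s j)) y \<and> (R^^j) y \<in> X" for j
  proof (induction j)
    case 0 show ?case using y by (simp add: s_def)
  next
    case (Suc j)
    have "(R^^Suc j) y = (T^^rt ((R^^j) y)) ((R^^j) y)" by (simp add: RX)
    also have "\<dots> = (T^^(rt ((R^^j) y) + s j)) y" using Suc by (simp add: funpow_add)
    finally show ?case using Suc inX y by (simp add: sSuc add.commute)
  qed
  have "s n < s (Suc n)" for n
  proof -
    have "rt ((R^^n) y) > 0" using rt Rs by blast
    then show ?thesis by (simp add: sSuc)
  qed
  then have smono: "strict_mono s" unfolding strict_mono_Suc_iff by blast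
  have s0: "s 0 = 0" by (simp add: s_def)
  have visit: "\<exists>j>0. n = s j" if n: "0<n" "(T^^n) y \<in> U" for n
  proof -
    have "n < s (Suc n)" using seq_suble[OF smono, of n] smono by (meson le_less_trans lessI strict_mono_less)
    define j0 where "j0 = (LEAST j. n < s j)"
    have j0: "n < s j0" unfolding j0_def by (rule LeastI) fact
    have "j0 \<noteq> 0" using j0 s0 n by (metis not_less0)
    then obtain j where jj: "j0 = Suc j" by (cases j0) auto
    have "\<not> n < s j" using not_less_Least[of j "\<lambda>j. n < s j"] jj j0_def by simp
    then have le: "s j \<le> n" and lt: "n < s j + rt ((R^^j) y)" using j0 jj sSuc by auto
    show ?thesis
    proof (cases "n = s j")
      case True
      then have "j \<noteq> 0" using s0 n by (metis less_irrefl)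
      then show ?thesis using True by blast
    next
      case False
      define k where "k = n - s j"
      have k: "0 < k" "k < rt ((R^^j) y)" using False le lt by (auto simp: k_def)
      have "(T^^k) ((R^^j) y) = (T^^(k + s j)) y" using Rs by (simp add: funpow_add)
      also have "k + s j = n" using le by (simp add: k_def)
      finally have "(T^^k) ((R^^j) y) \<in> U" using n by simp
      then show ?thesis using rtmin[OF k] by blast
    qed
  qed
  have "return_time T B y = s m"
    unfolding return_time_def
  proof (rule Least_equality)
    have "s 0 < s m" using smono m(1) by (simp add: strict_mono_less)
    then show "0 < s m \<and> (T^^s m) y \<in> B" using s0 m Rs R_def by simp
  next
    fix n assume nn: "0<n \<and> (T^^n) y \<in> B"
    then obtain j where j: "j>0" "n = s j" using visit B by blast
    then have "(R^^j) y \<in> B" using Rs nn by simp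
    then have "\<not> j < m" using mmin j R_def by blast
    then show "s m \<le> n" using j smono by (simp add: strict_mono_less_eq)
  qed
  then show ?thesis using Rs[of m] unfolding R_def by (simp add: induced_map_def[of T B])
qed

lemma conj_step:
  assumes TX: "T ` X \<subseteq> X" and UX: "U \<subseteq> X" and rec: "\<forall>z\<in>X. \<exists>n>0. (T^^n) z \<in> U"
   and hom: "homeomorphism X U \<phi> \<psi>" and eq: "\<forall>x\<in>X. \<phi> (T x) = induced_map T U (\<phi> x)"
   and AX: "A \<subseteq> X" and recA: "\<forall>x\<in>A. \<exists>n>0. (T^^n) x \<in> A" and x: "x \<in> A"
  shows "\<phi> (induced_map T A x) = induced_map T (\<phi> ` A) (\<phi> x)"
proof -
  define R where "R = induced_map T U"
  define r where "r = return_time T A x"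
  have r: "r > 0" "(T^^r) x \<in> A"
    using LeastI_ex[OF recA[rule_format, OF x]] unfolding r_def return_time_def by auto
  have rmin: "(T^^j) x \<notin> A" if "0<j" "j<r" for j
    using not_less_Least[OF that(2)[unfolded r_def return_time_def]] that(1) by blast
  have phin: "\<phi> ((T^^n) z) = (R^^n) (\<phi> z)" if "z \<in> X" for z n
  proof (induction n)
    case 0 then show ?case by simp
  next
    case (Suc n)
    have "\<phi> ((T^^Suc n) z) = R (\<phi> ((T^^n) z))" using eq funpow_in[OF TX that, of n] by (simp add: R_def)
    then show ?case using Suc by simp
  qed
  have inj: "inj_on \<phi> X" using hom unfolding homeomorphism_def by (metis inj_on_inverseI)
  have xX: "x \<in> X" using x AX by blast
  have phU: "\<phi> ` X = U" using hom by (simp add: homeomorphism_def)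
  have "induced_map T (\<phi> ` A) (\<phi> x) = (R^^r) (\<phi> x)"
    unfolding R_def
  proof (rule ind_ind[OF TX UX rec])
    show "\<phi> x \<in> X" using phU xX UX by blast
    show "\<phi> ` A \<subseteq> U" using phU AX by blast
    show "0 < r" by fact
    show "(induced_map T U ^^ r) (\<phi> x) \<in> \<phi> ` A" using phin[OF xX, of r] r(2) unfolding R_def by (metis image_eqI)
    show "\<forall>j. 0 < j \<and> j < r \<longrightarrow> (induced_map T U ^^ j) (\<phi> x) \<notin> \<phi> ` A"
    proof (intro allI impI)
      fix j assume j: "0 < j \<and> j < r"
      show "(induced_map T U ^^ j) (\<phi> x) \<notin> \<phi> ` A"
      proof
        assume "(induced_map T U ^^ j) (\<phi> x) \<in> \<phi> ` A"
        then obtain a where a: "a \<in> A" "\<phi> ((T^^j) x) = \<phi> a" using phin[OF xX, of j] by (auto simp: R_def)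
        then have "(T^^j) x = a" using inj funpow_in[OF TX xX, of j] AX by (meson inj_onD subsetD)
        then show False using rmin j a by blast
      qed
    qed
  qed
  moreover have "\<phi> (induced_map T A x) = \<phi> ((T^^r) x)" by (simp add: induced_map_def r_def)
  ultimately show ?thesis using phin[OF xX, of r] by simp
qed

lemma conj_comp:
  assumes "conjugacy f A S B R" "conjugacy h B R C Q"
  shows "conjugacy (h \<circ> f) A S C Q"
proof -
  obtain p where p: "homeomorphism A B f p" and e1: "\<forall>x\<in>A. f (S x) = R (f x)"
    using assms(1) unfolding conjugacy_def by blast
  obtain q where q: "homeomorphism B C h q" and e2: "\<forall>x\<in>B. h (R x) = Q (h x)"
    using assms(2) unfolding conjugacy_def by blast
  have "\<forall>x\<in>A. f x \<in> B" using p unfolding homeomorphism_def by blast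
  then show ?thesis unfolding conjugacy_def
    using homeomorphism_compose[OF p q] e1 e2 by auto
qed

theorem mainTheorem10:
  fixes X U :: "'a::metric_space set" and T \<phi> :: "'a \<Rightarrow> 'a"
  assumes "minimal_cantor_system X T"
    and "clopen_in X U" and "U \<subset> X"
    and "conjugacy \<phi> X T U (induced_map T U)"
  shows "\<forall>k::nat. conjugacy \<phi> ((\<phi> ^^ k) ` X) (induced_map T ((\<phi> ^^ k) ` X))
                          ((\<phi> ^^ Suc k) ` X) (induced_map T ((\<phi> ^^ Suc k) ` X))
              \<and> conjugacy (\<phi> ^^ k) X T ((\<phi> ^^ k) ` X) (induced_map T ((\<phi> ^^ k) ` X))"
proof -
  obtain g where hg: "homeomorphism X X T g" and cs: "cantor_set X"
    and dense: "\<forall>x\<in>X. X \<subseteq> closure (orbit X T x)"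
    using assms(1) unfolding minimal_cantor_system_def by blast
  have cpt: "compact X" and Xne: "X \<noteq> {}" using cs unfolding cantor_set_def by auto
  have TX: "T ` X \<subseteq> X" using hg unfolding homeomorphism_def by blast
  obtain \<psi> where hom: "homeomorphism X U \<phi> \<psi>" and eq: "\<forall>x\<in>X. \<phi> (T x) = induced_map T U (\<phi> x)"
    using assms(4) unfolding conjugacy_def by blast
  have UX: "U \<subseteq> X" using assms(3) by blast
  have Uo: "openin (top_of_set X) U" using assms(2) unfolding clopen_in_def by blast
  have phU: "\<phi> ` X = U" using hom by (simp add: homeomorphism_def)
  have Une: "U \<noteq> {}" using phU Xne by blast
  have rec: "\<forall>z\<in>X. \<exists>n>0. (T^^n) z \<in> U" using recur[OF hg dense cpt Uo Une] by blast
  define P where "P k = (\<phi>^^k) ` X" for k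
  have PSuc: "P (Suc k) = \<phi> ` P k" for k by (simp add: P_def image_comp)
  have Pprops: "P k \<subseteq> X \<and> openin (top_of_set X) (P k) \<and> P k \<noteq> {}" for k
  proof (induction k)
    case 0 then show ?case using Xne by (simp add: P_def)
  next
    case (Suc k)
    have "openin (top_of_set U) (\<phi> ` P k)" using homeomorphism_imp_open_map[OF hom] Suc by blast
    then have "openin (top_of_set X) (\<phi> ` P k)" using Uo openin_trans by blast
    moreover have "\<phi> ` P k \<subseteq> X" using Suc phU UX by blast
    moreover have "\<phi> ` P k \<noteq> {}" using Suc by blast
    ultimately show ?case by (simp add: PSuc)
  qed
  have recP: "\<forall>x\<in>P k. \<exists>n>0. (T^^n) x \<in> P k" for k
    using recur[OF hg dense cpt] Pprops by blast
  have step: "conjugacy \<phi> (P k) (induced_map T (P k)) (P (Suc k)) (induced_map T (P (Suc k)))" for k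
    unfolding conjugacy_def
  proof
    have Psub: "P k \<subseteq> X" using Pprops by blast
    have sub: "P (Suc k) \<subseteq> U" unfolding PSuc using phU Psub by blast
    have "homeomorphism (P k) (P (Suc k)) \<phi> \<psi>"
      by (rule homeomorphism_of_subsets[OF hom Psub sub]) (simp add: PSuc)
    then show "\<exists>\<psi>. homeomorphism (P k) (P (Suc k)) \<phi> \<psi>" by blast
    show "\<forall>x\<in>P k. \<phi> (induced_map T (P k) x) = induced_map T (P (Suc k)) (\<phi> x)"
      unfolding PSuc using conj_step[OF TX UX rec hom eq Psub recP[of k]] by blast
  qed
  have base: "conjugacy id X T X (induced_map T X)"
    unfolding conjugacy_def
  proof
    show "\<exists>\<psi>. homeomorphism X X id \<psi>" using homeomorphism_ident unfolding id_def by blast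
    show "\<forall>x\<in>X. id (T x) = induced_map T X (id x)"
    proof
      fix x assume x: "x \<in> X"
      have "return_time T X x = 1" unfolding return_time_def
        by (rule Least_equality) (use x TX in auto)
      then show "id (T x) = induced_map T X (id x)" by (simp add: induced_map_def)
    qed
  qed
  have chain: "conjugacy (\<phi>^^k) X T (P k) (induced_map T (P k))" for k
  proof (induction k)
    case 0 then show ?case using base by (simp add: P_def id_def)
  next
    case (Suc k)
    then show ?case using conj_comp[OF Suc step[of k]] by (simp add: comp_def)
  qed
  show ?thesis using step chain unfolding P_def by blast
qed

end
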